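(* If $\beta_1>\beta_0$ and $\beta_2>\beta_0$, then the shape process $H^3$ is ergodic (positive recurrent).
   Context: For $\beta=(\beta_0,\beta_1,\beta_2)\in(0,\infty)^3$: for $x\in\mathbb{N}^3$, with zero boundary convention $x(0)=x(4)=0$, let $V_j(x)=\mathbf 1_{\{x(j-1)>x(j)\}}+\mathbf 1_{\{x(j+1)>x(j)\}}$. The crystal process $X^3$ is the continuous-time Markov chain on $\mathbb{N}^3$ jumping from $x$ to $x+e_j$ at rate $\beta_{V_j(x)}$ ($j=1,2,3$), no other transitions; the shape process is $H^3_t=(X^3_t(1)-X^3_t(2),X^3_t(2)-X^3_t(3))\in\mathbb{Z}^2$. *)

theory Defs
  imports "HOL-Analysis.Analysis"
begin

text \<open>Positive recurrence is expressed via the embedded jump chain and the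
  exponential holding times: the expected return time
  m_x = E_x[T_x], T_x = inf{t \<ge> J_1. X_t = x}, equals the sum over all
  first-return jump paths x, y_1, ..., y_n = x of the path probability
  times the sum of the mean holding times 1/q(x), 1/q(y_1), ..., 1/q(y_(n-1)).\<close>

definition total_rate :: "('a \<Rightarrow> 'a \<Rightarrow> real) \<Rightarrow> 'a \<Rightarrow> ennreal" where
  "total_rate Q x = (\<Sum>\<^sub>\<infinity> y \<in> - {x}. ennreal (Q x y))"

definition jump_prob :: "('a \<Rightarrow> 'a \<Rightarrow> real) \<Rightarrow> 'a \<Rightarrow> 'a \<Rightarrow> ennreal" where
  "jump_prob Q x y = (if y = x then 0 else ennreal (Q x y) / total_rate Q x)"

fun path_prob :: "('a \<Rightarrow> 'a \<Rightarrow> real) \<Rightarrow> 'a \<Rightarrow> 'a list \<Rightarrow> ennreal" where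
  "path_prob Q x [] = 1"
| "path_prob Q x (y # ys) = jump_prob Q x y * path_prob Q y ys"

definition holding_time_sum :: "('a \<Rightarrow> 'a \<Rightarrow> real) \<Rightarrow> 'a \<Rightarrow> 'a list \<Rightarrow> ennreal" where
  "holding_time_sum Q x ys = (\<Sum>z \<leftarrow> x # butlast ys. 1 / total_rate Q z)"

text \<open>First-return jump paths from x (the states visited after x).\<close>
definition return_paths :: "'a \<Rightarrow> 'a list set" where
  "return_paths x = {ys. ys \<noteq> [] \<and> last ys = x \<and> x \<notin> set (butlast ys)}"

definition return_prob :: "('a \<Rightarrow> 'a \<Rightarrow> real) \<Rightarrow> 'a \<Rightarrow> ennreal" where
  "return_prob Q x = (\<Sum>\<^sub>\<infinity> ys \<in> return_paths x. path_prob Q x ys)"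

definition mean_return_time :: "('a \<Rightarrow> 'a \<Rightarrow> real) \<Rightarrow> 'a \<Rightarrow> ennreal" where
  "mean_return_time Q x =
     (\<Sum>\<^sub>\<infinity> ys \<in> return_paths x. path_prob Q x ys * holding_time_sum Q x ys)"

definition positive_recurrent_state :: "('a \<Rightarrow> 'a \<Rightarrow> real) \<Rightarrow> 'a \<Rightarrow> bool" where
  "positive_recurrent_state Q x \<longleftrightarrow> return_prob Q x = 1 \<and> mean_return_time Q x < \<infinity>"

definition ctmc_irreducible :: "('a \<Rightarrow> 'a \<Rightarrow> real) \<Rightarrow> bool" where
  "ctmc_irreducible Q \<longleftrightarrow> (\<forall>x y. (x, y) \<in> {(a, b). a \<noteq> b \<and> Q a b > 0}\<^sup>*)"

definition ctmc_ergodic :: "('a \<Rightarrow> 'a \<Rightarrow> real) \<Rightarrow> bool" where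
  "ctmc_ergodic Q \<longleftrightarrow> ctmc_irreducible Q \<and> (\<forall>x. positive_recurrent_state Q x)"

type_synonym cstate = "nat \<times> nat \<times> nat"

text \<open>Coordinates x(1), x(2), x(3) with boundary convention x(0) = x(4) = 0.\<close>
definition coord :: "cstate \<Rightarrow> nat \<Rightarrow> nat" where
  "coord x j = (case x of (a, b, c) \<Rightarrow>
      (if j = 1 then a else if j = 2 then b else if j = 3 then c else 0))"

definition V :: "cstate \<Rightarrow> nat \<Rightarrow> nat" where
  "V x j = of_bool (coord x (j - 1) > coord x j) + of_bool (coord x (j + 1) > coord x j)"

definition add_e :: "cstate \<Rightarrow> nat \<Rightarrow> cstate" where
  "add_e x j = (case x of (a, b, c) \<Rightarrow>
      (if j = 1 then (a + 1, b, c) else if j = 2 then (a, b + 1, c) else (a, b, c + 1)))"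

definition crystal_Q :: "(nat \<Rightarrow> real) \<Rightarrow> cstate \<Rightarrow> cstate \<Rightarrow> real" where
  "crystal_Q \<beta> x y = (\<Sum>j\<in>{1, 2, 3}. if y = add_e x j then \<beta> (V x j) else 0)"

definition shape :: "cstate \<Rightarrow> int \<times> int" where
  "shape x = (int (coord x 1) - int (coord x 2), int (coord x 2) - int (coord x 3))"

text \<open>Jump rates of the shape process H^3 = shape(X^3): rate from h to h' is the
  rate at which X^3 jumps from a state x with shape x = h into the fibre over h'
  (this does not depend on the choice of x, which makes H^3 Markov).\<close>
definition shape_Q :: "(nat \<Rightarrow> real) \<Rightarrow> int \<times> int \<Rightarrow> int \<times> int \<Rightarrow> real" where
  "shape_Q \<beta> h h' = (let x = (SOME x. shape x = h) in
      (\<Sum>j\<in>{1, 2, 3}. if shape (add_e x j) = h' then \<beta> (V x j) else 0))"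

end

theory Submission
  imports Defs
begin

lemma E_summable[simp]: "(f::'a \<Rightarrow> ennreal) summable_on S"
  by (rule nonneg_summable_on_complete) simp

lemma E_cmult:
  fixes f :: "'a \<Rightarrow> ennreal"
  shows "infsum (\<lambda>x. c * f x) A = c * infsum f A"
proof -
  have "infsum (\<lambda>x. c * f x) A = (SUP F\<in>{F. finite F \<and> F\<subseteq>A}. sum (\<lambda>x. c * f x) F)"
    by (rule nonneg_infsum_complete) simp
  also have "\<dots> = (SUP F\<in>{F. finite F \<and> F\<subseteq>A}. c * sum f F)"
    by (simp add: sum_distrib_left)
  also have "\<dots> = c * (SUP F\<in>{F. finite F \<and> F\<subseteq>A}. sum f F)"
    by (simp add: SUP_mult_left_ennreal)
  also have "\<dots> = c * infsum f A"
    by (subst nonneg_infsum_complete[of A f]) simp_all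
  finally show ?thesis .
qed

lemma E_cmult_right:
  fixes f :: "'a \<Rightarrow> ennreal"
  shows "infsum (\<lambda>x. f x * c) A = infsum f A * c"
  using E_cmult[of c f A] by (simp add: mult.commute)

lemma E_add:
  fixes f g :: "'a \<Rightarrow> ennreal"
  shows "infsum (\<lambda>x. f x + g x) A = infsum f A + infsum g A"
  by (rule infsum_add) simp_all

lemma E_sum:
  fixes f :: "'i \<Rightarrow> 'a \<Rightarrow> ennreal"
  assumes "finite I"
  shows "infsum (\<lambda>x. \<Sum>i\<in>I. f i x) A = (\<Sum>i\<in>I. infsum (f i) A)"
  using assms by (induction I rule: finite_induct) (simp_all add: E_add)

lemma E_mono:
  fixes f g :: "'a \<Rightarrow> ennreal"
  assumes "\<And>x. x \<in> A \<Longrightarrow> f x \<le> g x"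
  shows "infsum f A \<le> infsum g A"
  by (rule infsum_mono) (simp_all add: assms)

lemma E_subset:
  fixes f :: "'a \<Rightarrow> ennreal"
  assumes "A \<subseteq> B"
  shows "infsum f A \<le> infsum f B"
  by (rule infsum_mono_neutral) (use assms in auto)

lemma E_Un:
  fixes f :: "'a \<Rightarrow> ennreal"
  assumes "A \<inter> B = {}"
  shows "infsum f (A \<union> B) = infsum f A + infsum f B"
  by (rule infsum_Un_disjoint) (simp_all add: assms)

lemma E_Sigma_finite:
  fixes f :: "'a \<times> 'b \<Rightarrow> ennreal"
  assumes "finite G"
  shows "infsum f (Sigma G B) = (\<Sum>x\<in>G. infsum (\<lambda>y. f (x, y)) (B x))"
  using assms
proof (induction G rule: finite_induct)
  case empty then show ?case by simp
next
  case (insert x G)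
  have eq: "Sigma (insert x G) B = (Pair x ` B x) \<union> Sigma G B" by auto
  have disj: "Pair x ` B x \<inter> Sigma G B = {}" using insert by auto
  have "infsum f (Pair x ` B x) = infsum (\<lambda>y. f (x, y)) (B x)"
    by (subst infsum_reindex) (auto simp: inj_on_def o_def)
  then show ?case using insert eq disj by (simp add: E_Un)
qed

lemma E_Sigma:
  fixes f :: "'a \<times> 'b \<Rightarrow> ennreal"
  shows "infsum f (Sigma A B) = infsum (\<lambda>x. infsum (\<lambda>y. f (x, y)) (B x)) A"
proof (rule antisym)
  show "infsum f (Sigma A B) \<le> infsum (\<lambda>x. infsum (\<lambda>y. f (x, y)) (B x)) A"
  proof (subst nonneg_infsum_complete[of "Sigma A B"], simp, rule SUP_least, clarify)
    fix F assume F: "finite F" "F \<subseteq> Sigma A B"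
    have G: "finite (fst ` F)" "fst ` F \<subseteq> A" using F by auto
    have "sum f F = infsum f F" using F by simp
    also have "\<dots> \<le> infsum f (Sigma (fst ` F) B)"
      by (rule E_subset) (use F in force)
    also have "\<dots> = (\<Sum>x\<in>fst ` F. infsum (\<lambda>y. f (x, y)) (B x))"
      by (rule E_Sigma_finite[OF G(1)])
    also have "\<dots> = infsum (\<lambda>x. infsum (\<lambda>y. f (x, y)) (B x)) (fst ` F)"
      using G by simp
    also have "\<dots> \<le> infsum (\<lambda>x. infsum (\<lambda>y. f (x, y)) (B x)) A"
      by (rule E_subset[OF G(2)])
    finally show "sum f F \<le> infsum (\<lambda>x. infsum (\<lambda>y. f (x, y)) (B x)) A" .
  qed
next
  show "infsum (\<lambda>x. infsum (\<lambda>y. f (x, y)) (B x)) A \<le> infsum f (Sigma A B)"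
  proof (subst nonneg_infsum_complete[of A], simp, rule SUP_least, clarify)
    fix G assume G: "finite G" "G \<subseteq> A"
    have "(\<Sum>x\<in>G. infsum (\<lambda>y. f (x, y)) (B x)) = infsum f (Sigma G B)"
      by (rule E_Sigma_finite[OF G(1), symmetric])
    also have "\<dots> \<le> infsum f (Sigma A B)"
      by (rule E_subset) (use G in auto)
    finally show "(\<Sum>x\<in>G. infsum (\<lambda>y. f (x, y)) (B x)) \<le> infsum f (Sigma A B)" .
  qed
qed

lemma E_nat_SUP:
  fixes g :: "nat \<Rightarrow> ennreal"
  shows "infsum g UNIV = (SUP n. \<Sum>k<n. g k)"
proof (rule antisym)
  show "infsum g UNIV \<le> (SUP n. \<Sum>k<n. g k)"
  proof (subst nonneg_infsum_complete, simp, rule SUP_least)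
    fix F :: "nat set" assume "F \<in> {F. finite F \<and> F \<subseteq> UNIV}"
    then have fin: "finite F" by simp
    then obtain n where "F \<subseteq> {..<n}"
      by (meson finite_nat_iff_bounded)
    then have "sum g F \<le> (\<Sum>k<n. g k)"
      by (intro sum_mono2) auto
    also have "\<dots> \<le> (SUP n. \<Sum>k<n. g k)" by (rule SUP_upper) simp
    finally show "sum g F \<le> (SUP n. \<Sum>k<n. g k)" .
  qed
next
  show "(SUP n. \<Sum>k<n. g k) \<le> infsum g UNIV"
  proof (rule SUP_least)
    fix n
    show "(\<Sum>k<n. g k) \<le> infsum g UNIV"
      using E_subset[of "{..<n}" UNIV g] by simp
  qed
qed


lemma path_prob_snoc:
  "path_prob Q y (ys @ [z]) = path_prob Q y ys * jump_prob Q (last (y # ys)) z"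
  by (induction ys arbitrary: y) (simp_all add: mult.assoc)

definition av :: "'a \<Rightarrow> nat \<Rightarrow> 'a list set" where
  "av x k = {ys. length ys = k \<and> x \<notin> set ys}"

definition rset :: "'a \<Rightarrow> nat \<Rightarrow> 'a list set" where
  "rset x k = {ys. length ys = Suc k \<and> last ys = x \<and> x \<notin> set (butlast ys)}"

definition aprob :: "('a \<Rightarrow> 'a \<Rightarrow> real) \<Rightarrow> 'a \<Rightarrow> 'a \<Rightarrow> nat \<Rightarrow> ennreal" where
  "aprob Q x y k = infsum (path_prob Q y) (av x k)"

definition rprob :: "('a \<Rightarrow> 'a \<Rightarrow> real) \<Rightarrow> 'a \<Rightarrow> 'a \<Rightarrow> nat \<Rightarrow> ennreal" where
  "rprob Q x y k = infsum (path_prob Q y) (rset x k)"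

lemma aprob_0: "aprob Q x y 0 = 1"
proof -
  have "av x 0 = {[]}" by (auto simp: av_def)
  then show ?thesis by (simp add: aprob_def)
qed

lemma av_Suc_Cons: "av x (Suc k) = (\<lambda>(z, ys). z # ys) ` (Sigma (- {x}) (\<lambda>_. av x k))"
proof (rule set_eqI)
  fix ys
  show "ys \<in> av x (Suc k) \<longleftrightarrow> ys \<in> (\<lambda>(z, ys). z # ys) ` (Sigma (- {x}) (\<lambda>_. av x k))"
    by (cases ys) (auto simp: av_def image_iff)
qed

lemma aprob_Suc:
  "aprob Q x y (Suc k) = infsum (\<lambda>z. jump_prob Q y z * aprob Q x z k) (- {x})"
proof -
  have inj: "inj_on (\<lambda>(z, ys). z # ys) (Sigma (- {x}) (\<lambda>_. av x k))"
    by (auto simp: inj_on_def)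
  have "aprob Q x y (Suc k) = infsum (path_prob Q y \<circ> (\<lambda>(z, ys). z # ys)) (Sigma (- {x}) (\<lambda>_. av x k))"
    unfolding aprob_def av_Suc_Cons by (rule infsum_reindex[OF inj])
  also have "\<dots> = infsum (\<lambda>z. infsum (\<lambda>ys. jump_prob Q y z * path_prob Q z ys) (av x k)) (- {x})"
    by (subst E_Sigma) (simp add: o_def)
  also have "\<dots> = infsum (\<lambda>z. jump_prob Q y z * aprob Q x z k) (- {x})"
    by (simp add: E_cmult aprob_def)
  finally show ?thesis .
qed

lemma snoc_image:
  "(\<lambda>(ys, z). ys @ [z]) ` (Sigma (av x k) (\<lambda>_. UNIV)) = rset x k \<union> av x (Suc k)"
proof (rule set_eqI)
  fix ws
  show "ws \<in> (\<lambda>(ys, z). ys @ [z]) ` (Sigma (av x k) (\<lambda>_. UNIV)) \<longleftrightarrow> ws \<in> rset x k \<union> av x (Suc k)"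
  proof
    assume "ws \<in> (\<lambda>(ys, z). ys @ [z]) ` (Sigma (av x k) (\<lambda>_. UNIV))"
    then obtain ys z where ws: "ws = ys @ [z]" "ys \<in> av x k" by auto
    then show "ws \<in> rset x k \<union> av x (Suc k)"
      by (cases "z = x") (auto simp: av_def rset_def)
  next
    assume a: "ws \<in> rset x k \<union> av x (Suc k)"
    then have "ws \<noteq> []" by (auto simp: av_def rset_def)
    then obtain ys z where ws: "ws = ys @ [z]" by (metis rev_exhaust)
    show "ws \<in> (\<lambda>(ys, z). ys @ [z]) ` (Sigma (av x k) (\<lambda>_. UNIV))"
      using a unfolding ws by (auto simp: av_def rset_def image_iff)
  qed
qed

lemma aprob_split:
  assumes stoch: "\<And>w. infsum (jump_prob Q w) UNIV = 1"
  shows "aprob Q x y k = rprob Q x y k + aprob Q x y (Suc k)"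
proof -
  have inj: "inj_on (\<lambda>(ys, z). ys @ [z]) (Sigma (av x k) (\<lambda>_. UNIV))"
    by (auto simp: inj_on_def)
  have disj: "rset x k \<inter> av x (Suc k) = {}"
  proof (rule ccontr)
    assume "rset x k \<inter> av x (Suc k) \<noteq> {}"
    then obtain ws where "ws \<in> rset x k" "ws \<in> av x (Suc k)" by blast
    then have "ws \<noteq> []" "last ws = x" "x \<notin> set ws" by (auto simp: av_def rset_def)
    then show False using last_in_set by metis
  qed
  have "aprob Q x y k = infsum (\<lambda>ys. path_prob Q y ys * infsum (jump_prob Q (last (y # ys))) UNIV) (av x k)"
    by (simp add: stoch aprob_def)
  also have "\<dots> = infsum (\<lambda>ys. infsum (\<lambda>z. path_prob Q y ys * jump_prob Q (last (y # ys)) z) UNIV) (av x k)"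
    by (simp add: E_cmult)
  also have "\<dots> = infsum (\<lambda>(ys, z). path_prob Q y (ys @ [z])) (Sigma (av x k) (\<lambda>_. UNIV))"
    by (subst E_Sigma) (simp add: path_prob_snoc)
  also have "\<dots> = infsum (path_prob Q y) ((\<lambda>(ys, z). ys @ [z]) ` (Sigma (av x k) (\<lambda>_. UNIV)))"
    by (subst infsum_reindex[OF inj]) (simp add: o_def case_prod_unfold)
  also have "\<dots> = rprob Q x y k + aprob Q x y (Suc k)"
    by (simp add: snoc_image E_Un[OF disj] rprob_def aprob_def)
  finally show ?thesis .
qed


lemma foster_sum:
  fixes U :: "'a \<Rightarrow> ennreal"
  assumes drift: "\<And>y. y \<noteq> x \<Longrightarrow> e + infsum (\<lambda>z. jump_prob Q y z * U z) UNIV \<le> U y"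
  shows "y \<noteq> x \<Longrightarrow> e * (\<Sum>k<n. aprob Q x y k) \<le> U y"
proof (induction n arbitrary: y)
  case 0 then show ?case by simp
next
  case (Suc n)
  have "(\<Sum>k<Suc n. aprob Q x y k) = 1 + (\<Sum>k<n. aprob Q x y (Suc k))"
    unfolding sum.lessThan_Suc_shift by (simp add: aprob_0)
  also have "(\<Sum>k<n. aprob Q x y (Suc k))
      = infsum (\<lambda>z. jump_prob Q y z * (\<Sum>k<n. aprob Q x z k)) (- {x})"
    by (simp add: aprob_Suc E_sum sum_distrib_left)
  finally have eq: "(\<Sum>k<Suc n. aprob Q x y k)
      = 1 + infsum (\<lambda>z. jump_prob Q y z * (\<Sum>k<n. aprob Q x z k)) (- {x})" .
  have "e * (\<Sum>k<Suc n. aprob Q x y k)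
      = e + infsum (\<lambda>z. jump_prob Q y z * (e * (\<Sum>k<n. aprob Q x z k))) (- {x})"
    unfolding eq by (simp add: distrib_left E_cmult[symmetric] mult.left_commute)
  also have "\<dots> \<le> e + infsum (\<lambda>z. jump_prob Q y z * U z) (- {x})"
    by (intro add_left_mono E_mono mult_left_mono Suc.IH) auto
  also have "\<dots> \<le> e + infsum (\<lambda>z. jump_prob Q y z * U z) UNIV"
    by (intro add_left_mono E_subset) auto
  also have "\<dots> \<le> U y" by (rule drift[OF Suc.prems])
  finally show ?case .
qed

lemma foster_sum_x:
  fixes U :: "'a \<Rightarrow> ennreal"
  assumes drift: "\<And>y. y \<noteq> x \<Longrightarrow> e + infsum (\<lambda>z. jump_prob Q y z * U z) UNIV \<le> U y"
  shows "e * (\<Sum>k<n. aprob Q x x (Suc k)) \<le> infsum (\<lambda>z. jump_prob Q x z * U z) UNIV"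
proof -
  have "e * (\<Sum>k<n. aprob Q x x (Suc k))
      = infsum (\<lambda>z. jump_prob Q x z * (e * (\<Sum>k<n. aprob Q x z k))) (- {x})"
    by (simp add: aprob_Suc E_sum sum_distrib_left E_cmult[symmetric] mult.left_commute)
  also have "\<dots> \<le> infsum (\<lambda>z. jump_prob Q x z * U z) (- {x})"
    by (intro E_mono mult_left_mono foster_sum[OF drift]) auto
  also have "\<dots> \<le> infsum (\<lambda>z. jump_prob Q x z * U z) UNIV"
    by (intro E_subset) auto
  finally show ?thesis .
qed

lemma rsum_identity:
  assumes stoch: "\<And>w. infsum (jump_prob Q w) UNIV = 1"
  shows "(\<Sum>k<m. rprob Q x y k) + aprob Q x y m = 1"
proof (induction m)
  case 0 then show ?case by (simp add: aprob_0)
next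
  case (Suc m)
  then show ?case using aprob_split[OF stoch, of x y m] by (simp add: add.assoc)
qed

lemma weighted_identity:
  assumes stoch: "\<And>w. infsum (jump_prob Q w) UNIV = 1"
  shows "(\<Sum>k<m. of_nat (Suc k) * rprob Q x y k) + of_nat m * aprob Q x y m = (\<Sum>k<m. aprob Q x y k)"
proof (induction m)
  case 0 then show ?case by simp
next
  case (Suc m)
  have sp: "aprob Q x y m = rprob Q x y m + aprob Q x y (Suc m)"
    by (rule aprob_split[OF stoch])
  have "(\<Sum>k<Suc m. of_nat (Suc k) * rprob Q x y k) + of_nat (Suc m) * aprob Q x y (Suc m)
     = (\<Sum>k<m. of_nat (Suc k) * rprob Q x y k) + of_nat (Suc m) * (rprob Q x y m + aprob Q x y (Suc m))"
    by (simp add: distrib_left add.assoc)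
  also have "\<dots> = (\<Sum>k<m. of_nat (Suc k) * rprob Q x y k) + of_nat (Suc m) * aprob Q x y m"
    by (simp only: sp[symmetric])
  also have "\<dots> = ((\<Sum>k<m. of_nat (Suc k) * rprob Q x y k) + of_nat m * aprob Q x y m) + aprob Q x y m"
    by (simp add: distrib_right add.assoc)
  also have "\<dots> = (\<Sum>k<Suc m. aprob Q x y k)"
    by (simp only: Suc.IH sum.lessThan_Suc)
  finally show ?case .
qed


lemma return_paths_Sigma: "return_paths x = snd ` (SIGMA k:UNIV. rset x k)"
proof (rule set_eqI)
  fix ys
  show "ys \<in> return_paths x \<longleftrightarrow> ys \<in> snd ` (SIGMA k:UNIV. rset x k)"
  proof
    assume "ys \<in> return_paths x"
    then have "(length ys - 1, ys) \<in> (SIGMA k:UNIV. rset x k)"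
      by (auto simp: return_paths_def rset_def)
    then show "ys \<in> snd ` (SIGMA k:UNIV. rset x k)" by force
  qed (auto simp: return_paths_def rset_def)
qed

lemma infsum_return_paths:
  fixes g :: "'a list \<Rightarrow> ennreal"
  shows "infsum g (return_paths x) = (SUP m. \<Sum>k<m. infsum g (rset x k))"
proof -
  have inj: "inj_on snd (SIGMA k:UNIV. rset x k)"
    by (auto simp: inj_on_def rset_def)
  have "infsum g (return_paths x) = infsum (g \<circ> snd) (SIGMA k:UNIV. rset x k)"
    unfolding return_paths_Sigma by (rule infsum_reindex[OF inj])
  also have "\<dots> = infsum (\<lambda>k. infsum g (rset x k)) UNIV"
    by (simp add: E_Sigma o_def)
  also have "\<dots> = (SUP m. \<Sum>k<m. infsum g (rset x k))"
    by (rule E_nat_SUP)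
  finally show ?thesis .
qed

lemma ennreal_div_bound:
  fixes S K :: ennreal
  assumes "ennreal e * S \<le> K" "e > 0" "K < top"
  shows "S \<le> K / ennreal e" "K / ennreal e < top"
proof -
  have "S = (S * ennreal e) / ennreal e"
    using assms(2) by (simp add: mult_divide_eq_ennreal)
  also have "\<dots> \<le> K / ennreal e"
    by (rule divide_right_mono_ennreal) (use assms(1) in \<open>simp add: mult.commute\<close>)
  finally show "S \<le> K / ennreal e" .
  show "K / ennreal e < top"
  proof -
    have "K \<noteq> top" using assms(3) by simp
    moreover have "ennreal e \<noteq> 0" using assms(2) by simp
    ultimately show ?thesis by (metis ennreal_divide_eq_top_iff top.not_eq_extremum)
  qed
qed

theorem foster_return:
  fixes U :: "'a \<Rightarrow> ennreal"
  assumes stoch: "\<And>w. infsum (jump_prob Q w) UNIV = 1"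
  assumes drift: "\<And>y. y \<noteq> x \<Longrightarrow> ennreal e + infsum (\<lambda>z. jump_prob Q y z * U z) UNIV \<le> U y"
  assumes epos: "e > 0"
  assumes fin: "infsum (\<lambda>z. jump_prob Q x z * U z) UNIV < top"
  shows "return_prob Q x = 1"
    and "infsum (\<lambda>ys. path_prob Q x ys * of_nat (length ys)) (return_paths x) < top"
proof -
  define K where "K = infsum (\<lambda>z. jump_prob Q x z * U z) UNIV"
  define B where "B = 1 + K / ennreal e"
  have Bfin: "B < top"
    using ennreal_div_bound(2)[of e 0 K] epos fin by (simp add: B_def K_def)
  have bound: "(\<Sum>k<n. aprob Q x x k) \<le> B" for n
  proof (cases n)
    case 0 then show ?thesis by simp
  next
    case (Suc m)
    have "ennreal e * (\<Sum>k<m. aprob Q x x (Suc k)) \<le> K"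
      unfolding K_def by (rule foster_sum_x[OF drift])
    then have "(\<Sum>k<m. aprob Q x x (Suc k)) \<le> K / ennreal e"
      using ennreal_div_bound(1) epos fin K_def by blast
    then show ?thesis
      unfolding Suc sum.lessThan_Suc_shift B_def by (simp add: aprob_0 add_left_mono)
  qed
  have rp: "return_prob Q x = (SUP m. \<Sum>k<m. rprob Q x x k)"
    unfolding return_prob_def rprob_def by (rule infsum_return_paths)
  show "return_prob Q x = 1"
  proof (rule antisym)
    show "return_prob Q x \<le> 1"
      unfolding rp
    proof (rule SUP_least)
      fix m
      have "(\<Sum>k<m. rprob Q x x k) \<le> (\<Sum>k<m. rprob Q x x k) + aprob Q x x m" by simp
      also have "\<dots> = 1" by (rule rsum_identity[OF stoch])
      finally show "(\<Sum>k<m. rprob Q x x k) \<le> 1" .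
    qed
  next
    show "1 \<le> return_prob Q x"
    proof (rule ennreal_le_epsilon)
      fix \<epsilon> :: real assume "\<epsilon> > 0"
      define Br where "Br = enn2real B"
      have B_eq: "B = ennreal Br" using Bfin by (simp add: Br_def ennreal_enn2real_if)
      have Br0: "Br \<ge> 0" by (simp add: Br_def)
      obtain n :: nat where n: "Br / \<epsilon> < real n" using reals_Archimedean2 by blast
      define m where "m = Suc n"
      have m: "real m > Br / \<epsilon>" "m \<ge> 1" using n by (auto simp: m_def)
      have a1: "aprob Q x x m \<le> 1"
        using rsum_identity[OF stoch, where m=m and x=x and y=x] by (metis add_increasing order_refl zero_le)
      define ar where "ar = enn2real (aprob Q x x m)"
      have a_eq: "aprob Q x x m = ennreal ar"
        using a1 by (metis ar_def ennreal_enn2real ennreal_one_less_top le_less_trans less_top)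
      have ar0: "ar \<ge> 0" by (simp add: ar_def)
      have "of_nat m * aprob Q x x m \<le> (\<Sum>k<m. aprob Q x x k)"
        using weighted_identity[OF stoch, where m=m and x=x and y=x] by (metis add_increasing zero_le order_refl)
      also have "\<dots> \<le> B" by (rule bound)
      finally have "ennreal (real m * ar) \<le> ennreal Br"
        by (simp add: a_eq B_eq ennreal_mult ennreal_of_nat_eq_real_of_nat ar0)
      then have "real m * ar \<le> Br" using Br0 by simp
      moreover have "Br < real m * \<epsilon>" using m \<open>\<epsilon> > 0\<close> by (simp add: field_simps)
      ultimately have "real m * ar < real m * \<epsilon>" by linarith
      then have "ar < \<epsilon>" using m(2) by (simp add: mult_less_cancel_left)
      have "1 = (\<Sum>k<m. rprob Q x x k) + aprob Q x x m"
        by (rule rsum_identity[OF stoch, symmetric])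
      also have "\<dots> \<le> return_prob Q x + ennreal \<epsilon>"
        unfolding rp a_eq
        by (intro add_mono SUP_upper ennreal_leI) (use \<open>ar < \<epsilon>\<close> in auto)
      finally show "1 \<le> return_prob Q x + ennreal \<epsilon>" .
    qed
  qed
  have "infsum (\<lambda>ys. path_prob Q x ys * of_nat (length ys)) (return_paths x)
      = (SUP m. \<Sum>k<m. infsum (\<lambda>ys. path_prob Q x ys * of_nat (length ys)) (rset x k))"
    by (rule infsum_return_paths)
  also have "\<dots> = (SUP m. \<Sum>k<m. of_nat (Suc k) * rprob Q x x k)"
  proof -
    have "infsum (\<lambda>ys. path_prob Q x ys * of_nat (length ys)) (rset x k) = of_nat (Suc k) * rprob Q x x k" for k
    proof -
      have "infsum (\<lambda>ys. path_prob Q x ys * of_nat (length ys)) (rset x k)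
          = infsum (\<lambda>ys. path_prob Q x ys * of_nat (Suc k)) (rset x k)"
        by (rule infsum_cong) (simp add: rset_def)
      then show ?thesis by (simp add: E_cmult_right rprob_def mult.commute)
    qed
    then show ?thesis by simp
  qed
  also have "\<dots> \<le> B"
  proof (rule SUP_least)
    fix m
    have "(\<Sum>k<m. of_nat (Suc k) * rprob Q x x k) \<le> (\<Sum>k<m. aprob Q x x k)"
      using weighted_identity[OF stoch, where m=m and x=x and y=x] by (metis add_increasing2 zero_le order_refl)
    also have "\<dots> \<le> B" by (rule bound)
    finally show "(\<Sum>k<m. of_nat (Suc k) * rprob Q x x k) \<le> B" .
  qed
  also have "\<dots> < top" by (rule Bfin)
  finally show "infsum (\<lambda>ys. path_prob Q x ys * of_nat (length ys)) (return_paths x) < top" .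
qed


lemma sum_list_map_le:
  fixes f :: "'a \<Rightarrow> ennreal"
  assumes "\<And>z. f z \<le> b"
  shows "sum_list (map f xs) \<le> of_nat (length xs) * b"
  by (induction xs) (auto simp: assms distrib_right intro!: add_mono)

theorem pos_rec_from_foster:
  fixes U :: "'a \<Rightarrow> ennreal"
  assumes stoch: "\<And>w. infsum (jump_prob Q w) UNIV = 1"
  assumes drift: "\<And>y. y \<noteq> x \<Longrightarrow> ennreal e + infsum (\<lambda>z. jump_prob Q y z * U z) UNIV \<le> U y"
  assumes epos: "e > 0"
  assumes fin: "infsum (\<lambda>z. jump_prob Q x z * U z) UNIV < top"
  assumes tr: "\<And>z. \<exists>t. total_rate Q z = ennreal t \<and> t \<ge> c"
  assumes cpos: "c > 0"
  shows "positive_recurrent_state Q x"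
proof -
  have hb: "1 / total_rate Q z \<le> ennreal (1 / c)" for z
  proof -
    obtain t where t: "total_rate Q z = ennreal t" "t \<ge> c" using tr by blast
    then have "t > 0" using cpos by linarith
    then have "1 / total_rate Q z = ennreal (1 / t)"
      using t by (metis divide_ennreal ennreal_1 zero_le_one)
    also have "\<dots> \<le> ennreal (1 / c)"
      using t cpos by (intro ennreal_leI) (simp add: frac_le)
    finally show ?thesis .
  qed
  have "mean_return_time Q x \<le> infsum (\<lambda>ys. path_prob Q x ys * of_nat (length ys) * ennreal (1 / c)) (return_paths x)"
    unfolding mean_return_time_def
  proof (rule E_mono)
    fix ys assume "ys \<in> return_paths x"
    then have ne: "ys \<noteq> []" by (simp add: return_paths_def)
    have "holding_time_sum Q x ys \<le> of_nat (length (x # butlast ys)) * ennreal (1 / c)"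
      unfolding holding_time_sum_def by (rule sum_list_map_le[OF hb])
    also have "length (x # butlast ys) = length ys" using ne by simp
    finally show "path_prob Q x ys * holding_time_sum Q x ys \<le> path_prob Q x ys * of_nat (length ys) * ennreal (1 / c)"
      by (simp add: mult.assoc mult_left_mono)
  qed
  also have "\<dots> = infsum (\<lambda>ys. path_prob Q x ys * of_nat (length ys)) (return_paths x) * ennreal (1 / c)"
    by (rule E_cmult_right)
  also have "\<dots> < top"
    using foster_return(2)[OF stoch drift epos fin] by (simp add: ennreal_mult_less_top)
  finally have "mean_return_time Q x < top" .
  then show ?thesis
    using foster_return(1)[OF stoch drift epos fin] by (simp add: positive_recurrent_state_def)
qed


definition mv :: "int \<times> int \<Rightarrow> nat \<Rightarrow> int \<times> int" where
  "mv h j = (if j = 1 then (fst h + 1, snd h) else if j = 2 then (fst h - 1, snd h + 1)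
             else (fst h, snd h - 1))"

definition Vh :: "int \<times> int \<Rightarrow> nat \<Rightarrow> nat" where
  "Vh h j = (if j = 1 then of_bool (fst h < 0) else if j = 2 then of_bool (fst h > 0) + of_bool (snd h < 0)
             else of_bool (snd h > 0))"

definition rt :: "(nat \<Rightarrow> real) \<Rightarrow> int \<times> int \<Rightarrow> nat \<Rightarrow> real" where
  "rt \<beta> h j = \<beta> (Vh h j)"

lemma shape_surj: "\<exists>x. shape x = h"
proof -
  obtain p q where h: "h = (p, q)" by (cases h)
  define N where "N = \<bar>p\<bar> + \<bar>q\<bar>"
  have "shape (nat (N + q + p), nat (N + q), nat N) = h"
    unfolding h shape_def coord_def N_def by auto
  then show ?thesis by blast
qed

lemma shape_add_e: "j \<in> {1, 2, 3} \<Longrightarrow> shape (add_e x j) = mv (shape x) j"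
  by (cases x) (auto simp: shape_def add_e_def coord_def mv_def)

lemma V_shape: "j \<in> {1, 2, 3} \<Longrightarrow> V x j = Vh (shape x) j"
  by (cases x) (auto simp: V_def Vh_def shape_def coord_def)

lemma shape_Q_eq:
  "shape_Q \<beta> h h' = (\<Sum>j\<in>{1, 2, 3}. if h' = mv h j then rt \<beta> h j else 0)"
proof -
  define x where "x = (SOME x. shape x = h)"
  have sx: "shape x = h" unfolding x_def using shape_surj by (rule someI_ex)
  have "shape_Q \<beta> h h' = (\<Sum>j\<in>{1, 2, 3}. if shape (add_e x j) = h' then \<beta> (V x j) else 0)"
    by (simp add: shape_Q_def x_def Let_def)
  also have "\<dots> = (\<Sum>j\<in>{1, 2, 3}. if h' = mv h j then rt \<beta> h j else 0)"
    by (rule sum.cong) (auto simp: shape_add_e V_shape sx rt_def)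
  finally show ?thesis .
qed

lemma mv_distinct:
  "mv h 1 \<noteq> mv h 2" "mv h 1 \<noteq> mv h 3" "mv h 2 \<noteq> mv h 3"
  "mv h 1 \<noteq> h" "mv h 2 \<noteq> h" "mv h 3 \<noteq> h"
  by (auto simp: mv_def prod_eq_iff)

lemma shape_Q_mv:
  "shape_Q \<beta> h (mv h 1) = rt \<beta> h 1" "shape_Q \<beta> h (mv h 2) = rt \<beta> h 2"
  "shape_Q \<beta> h (mv h 3) = rt \<beta> h 3"
  using mv_distinct[of h] by (simp_all add: shape_Q_eq)

lemmas shape_Q_mv' = shape_Q_mv[simplified]
lemmas mv_distinct' = mv_distinct[simplified]

lemma shape_Q_other:
  "z \<notin> {mv h 1, mv h 2, mv h 3} \<Longrightarrow> shape_Q \<beta> h z = 0"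
  by (auto simp: shape_Q_eq)

lemma infsum_nbrs:
  fixes g :: "int \<times> int \<Rightarrow> ennreal"
  assumes "\<And>z. z \<notin> {mv h 1, mv h 2, mv h 3} \<Longrightarrow> g z = 0"
  assumes "{mv h 1, mv h 2, mv h 3} \<subseteq> A"
  shows "infsum g A = g (mv h 1) + g (mv h 2) + g (mv h 3)"
proof -
  have "infsum g A = infsum g {mv h 1, mv h 2, mv h 3}"
    by (rule infsum_cong_neutral) (use assms in auto)
  also have "\<dots> = g (mv h 1) + g (mv h 2) + g (mv h 3)"
    using mv_distinct[of h] by (simp add: add.assoc)
  finally show ?thesis .
qed

definition TT :: "(nat \<Rightarrow> real) \<Rightarrow> int \<times> int \<Rightarrow> real" where
  "TT \<beta> h = rt \<beta> h 1 + rt \<beta> h 2 + rt \<beta> h 3"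

context
  fixes \<beta> :: "nat \<Rightarrow> real"
  assumes b0: "\<beta> 0 > 0" and b1: "\<beta> 1 > \<beta> 0" and b2: "\<beta> 2 > \<beta> 0"
begin

lemma Vh_le2: "Vh h j \<le> 2"
  by (auto simp: Vh_def)

lemma rt_ge: "rt \<beta> h j \<ge> \<beta> 0"
proof -
  have "Vh h j = 0 \<or> Vh h j = 1 \<or> Vh h j = 2" using Vh_le2[of h j] by arith
  then show ?thesis using b1 b2 by (auto simp: rt_def)
qed

lemma rt_le: "rt \<beta> h j \<le> \<beta> 0 + \<beta> 1 + \<beta> 2"
proof -
  have "Vh h j = 0 \<or> Vh h j = 1 \<or> Vh h j = 2" using Vh_le2[of h j] by arith
  then show ?thesis using b0 b1 b2 by (auto simp: rt_def)
qed

lemma rt_pos: "rt \<beta> h j > 0"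
  using rt_ge[of h j] b0 by linarith

lemma TT_pos: "TT \<beta> h \<ge> 3 * \<beta> 0"
  using rt_ge[of h 1] rt_ge[of h 2] rt_ge[of h 3] by (simp add: TT_def)

lemma TT_le: "TT \<beta> h \<le> 3 * (\<beta> 0 + \<beta> 1 + \<beta> 2)"
  using rt_le[of h 1] rt_le[of h 2] rt_le[of h 3] by (simp add: TT_def)

lemma shape_Q_nonneg: "shape_Q \<beta> h z \<ge> 0"
  unfolding shape_Q_eq by (rule sum_nonneg) (simp add: less_imp_le[OF rt_pos])

lemma total_rate_shape: "total_rate (shape_Q \<beta>) h = ennreal (TT \<beta> h)"
proof -
  have "total_rate (shape_Q \<beta>) h
      = ennreal (shape_Q \<beta> h (mv h 1)) + ennreal (shape_Q \<beta> h (mv h 2)) + ennreal (shape_Q \<beta> h (mv h 3))"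
    unfolding total_rate_def
    by (rule infsum_nbrs) (use mv_distinct[of h] in \<open>auto simp: shape_Q_other\<close>)
  also have "\<dots> = ennreal (TT \<beta> h)"
    using rt_pos[of h] by (simp add: shape_Q_mv shape_Q_mv' TT_def ennreal_plus[symmetric] add.assoc less_imp_le del: ennreal_plus)
  finally show ?thesis .
qed

lemma jump_prob_shape:
  "jump_prob (shape_Q \<beta>) h z = ennreal (shape_Q \<beta> h z / TT \<beta> h)"
proof -
  have tp: "TT \<beta> h > 0" using TT_pos[of h] b0 by linarith
  show ?thesis
  proof (cases "z = h")
    case True
    then have "shape_Q \<beta> h z = 0" using mv_distinct[of h] by (intro shape_Q_other) auto
    then show ?thesis using True by (simp add: jump_prob_def)
  next
    case False
    then show ?thesis
      using tp shape_Q_nonneg[of h z]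
      by (simp add: jump_prob_def total_rate_shape divide_ennreal)
  qed
qed

lemma infsum_jump_shape:
  fixes U :: "int \<times> int \<Rightarrow> real"
  assumes "\<And>z. U z \<ge> 0"
  shows "infsum (\<lambda>z. jump_prob (shape_Q \<beta>) h z * ennreal (U z)) UNIV
    = ennreal ((rt \<beta> h 1 * U (mv h 1) + rt \<beta> h 2 * U (mv h 2) + rt \<beta> h 3 * U (mv h 3)) / TT \<beta> h)"
proof -
  have tp: "TT \<beta> h > 0" using TT_pos[of h] b0 by linarith
  have "infsum (\<lambda>z. jump_prob (shape_Q \<beta>) h z * ennreal (U z)) UNIV
     = jump_prob (shape_Q \<beta>) h (mv h 1) * ennreal (U (mv h 1))
     + jump_prob (shape_Q \<beta>) h (mv h 2) * ennreal (U (mv h 2))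
     + jump_prob (shape_Q \<beta>) h (mv h 3) * ennreal (U (mv h 3))"
    by (rule infsum_nbrs) (auto simp: jump_prob_shape shape_Q_other simp del: ennreal_eq_0_iff)
  also have "\<dots> = ennreal ((rt \<beta> h 1 * U (mv h 1) + rt \<beta> h 2 * U (mv h 2) + rt \<beta> h 3 * U (mv h 3)) / TT \<beta> h)"
    using tp rt_pos[of h] assms
    by (simp add: jump_prob_shape shape_Q_mv shape_Q_mv' ennreal_mult[symmetric] ennreal_plus[symmetric]
        add_divide_distrib less_imp_le del: ennreal_plus)
  finally show ?thesis .
qed

lemma stoch_shape: "infsum (jump_prob (shape_Q \<beta>) h) UNIV = 1"
proof -
  have tp: "TT \<beta> h > 0" using TT_pos[of h] b0 by linarith
  have "infsum (jump_prob (shape_Q \<beta>) h) UNIV = infsum (\<lambda>z. jump_prob (shape_Q \<beta>) h z * ennreal 1) UNIV"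
    by simp
  also have "\<dots> = ennreal (TT \<beta> h / TT \<beta> h)"
    by (subst infsum_jump_shape) (simp_all add: TT_def)
  also have "\<dots> = 1" using tp by simp
  finally show ?thesis .
qed

end


definition fq :: "int \<times> int \<Rightarrow> real" where
  "fq h = real_of_int (fst h) ^ 2 + real_of_int (fst h) * real_of_int (snd h) + real_of_int (snd h) ^ 2"

lemma fq_nonneg: "fq h \<ge> 0"
proof -
  have "fq h = (real_of_int (fst h) + real_of_int (snd h) / 2) ^ 2 + 3 / 4 * real_of_int (snd h) ^ 2"
    by (simp add: fq_def power2_eq_square algebra_simps)
  then show ?thesis by simp
qed

lemma fq_diff:
  "fq (mv h 1) - fq h = 2 * real_of_int (fst h) + real_of_int (snd h) + 1"
  "fq (mv h 2) - fq h = - real_of_int (fst h) + real_of_int (snd h) + 1"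
  "fq (mv h 3) - fq h = - real_of_int (fst h) - 2 * real_of_int (snd h) + 1"
  by (simp_all add: fq_def mv_def power2_eq_square algebra_simps)

definition Di :: "int \<times> int \<Rightarrow> int \<times> int \<Rightarrow> int" where
  "Di x h = 3 * max 0 (max (- (fst x - fst h)) (snd x - snd h)) + (fst x - fst h) - (snd x - snd h)"

lemma Di_nonneg: "Di x h \<ge> 0"
  unfolding Di_def by (auto simp: max_def)

lemma Di_zero: "Di x h = 0 \<Longrightarrow> h = x"
  unfolding Di_def by (cases x, cases h) (auto simp: max_def split: if_splits)

lemma Di_step: "j \<in> {1, 2, 3} \<Longrightarrow> Di x (mv h j) = Di x h - 1 \<or> Di x (mv h j) = Di x h + 2"
  unfolding Di_def mv_def by (auto simp: max_def split: if_splits)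

lemma Di_dec: "h \<noteq> x \<Longrightarrow> \<exists>j\<in>{1, 2, 3}. Di x (mv h j) = Di x h - 1"
  unfolding Di_def mv_def by (cases x, cases h) (auto simp: max_def split: if_splits)

lemma Di_bound: "Di x h \<le> 4 * (\<bar>fst x\<bar> + \<bar>snd x\<bar> + \<bar>fst h\<bar> + \<bar>snd h\<bar>)"
  unfolding Di_def by (auto simp: max_def abs_if split: if_splits)


lemma mm: "(c::real) \<ge> g \<Longrightarrow> g \<ge> 0 \<Longrightarrow> P \<ge> Z \<Longrightarrow> Z \<ge> 0 \<Longrightarrow> g*Z \<le> c*P"
  by (meson mult_mono order_trans)

context
  fixes \<beta> :: "nat \<Rightarrow> real"
  assumes b0: "\<beta> 0 > 0" and b1: "\<beta> 1 > \<beta> 0" and b2: "\<beta> 2 > \<beta> 0"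
begin

definition gg :: real where "gg = min (\<beta> 1 - \<beta> 0) (\<beta> 2 - \<beta> 0)"

lemma gg_pos: "gg > 0" using b1 b2 by (simp add: gg_def)

lemma lin_drift:
  fixes p q :: int
  defines "a \<equiv> real_of_int p" and "b \<equiv> real_of_int q"
  shows "rt \<beta> (p, q) 1 * (2 * a + b) + rt \<beta> (p, q) 2 * (- a + b) + rt \<beta> (p, q) 3 * (- a - 2 * b)
         \<le> - gg * (\<bar>a\<bar> + \<bar>b\<bar>)"
proof -
  have g1: "gg \<le> \<beta> 1 - \<beta> 0" and g2: "gg \<le> \<beta> 2 - \<beta> 0" and g0: "gg \<ge> 0"
    using gg_pos by (auto simp: gg_def)
  consider "p > 0" "q > 0" | "p > 0" "q = 0" | "p > 0" "q < 0"
    | "p = 0" "q > 0" | "p = 0" "q = 0" | "p = 0" "q < 0"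
    | "p < 0" "q > 0" | "p < 0" "q = 0" | "p < 0" "q < 0"
    by fastforce
  then show ?thesis
  proof cases
    case 1
    then have "a > 0" "b > 0" by (simp_all add: a_def b_def)
    then have "gg * (\<bar>a\<bar> + \<bar>b\<bar>) \<le> (\<beta> 1 - \<beta> 0) * (2 * a + b)"
      by (intro mm g1 g0) auto
    then show ?thesis using 1 by (simp add: rt_def Vh_def algebra_simps)
  next
    case 2
    then have "a > 0" "b = 0" by (simp_all add: a_def b_def)
    then have "gg * (\<bar>a\<bar> + \<bar>b\<bar>) \<le> (\<beta> 1 - \<beta> 0) * (a - b)"
      by (intro mm g1 g0) auto
    then show ?thesis using 2 by (simp add: rt_def Vh_def algebra_simps)
  next
    case 3
    then have "a > 0" "b < 0" by (simp_all add: a_def b_def)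
    then have "gg * (\<bar>a\<bar> + \<bar>b\<bar>) \<le> (\<beta> 2 - \<beta> 0) * (a - b)"
      by (intro mm g2 g0) auto
    then show ?thesis using 3 by (simp add: rt_def Vh_def algebra_simps numeral_2_eq_2)
  next
    case 4
    then have "a = 0" "b > 0" by (simp_all add: a_def b_def)
    then have "gg * (\<bar>a\<bar> + \<bar>b\<bar>) \<le> (\<beta> 1 - \<beta> 0) * (a + 2 * b)"
      by (intro mm g1 g0) auto
    then show ?thesis using 4 by (simp add: rt_def Vh_def algebra_simps)
  next
    case 5
    then have "a = 0" "b = 0" by (simp_all add: a_def b_def)
    then show ?thesis using 5 by (simp add: rt_def Vh_def algebra_simps)
  next
    case 6
    then have "a = 0" "b < 0" by (simp_all add: a_def b_def)
    then have "gg * (\<bar>a\<bar> + \<bar>b\<bar>) \<le> (\<beta> 1 - \<beta> 0) * (a - b)"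
      by (intro mm g1 g0) auto
    then show ?thesis using 6 by (simp add: rt_def Vh_def algebra_simps)
  next
    case 7
    then have "a < 0" "b > 0" by (simp_all add: a_def b_def)
    then have "gg * (\<bar>a\<bar> + \<bar>b\<bar>) \<le> (\<beta> 1 - \<beta> 0) * (b - a)"
      by (intro mm g1 g0) auto
    then show ?thesis using 7 by (simp add: rt_def Vh_def algebra_simps)
  next
    case 8
    then have "a < 0" "b = 0" by (simp_all add: a_def b_def)
    then have "gg * (\<bar>a\<bar> + \<bar>b\<bar>) \<le> (\<beta> 1 - \<beta> 0) * (- 2 * a - b)"
      by (intro mm g1 g0) auto
    then show ?thesis using 8 by (simp add: rt_def Vh_def algebra_simps)
  next
    case 9
    then have "a < 0" "b < 0" by (simp_all add: a_def b_def)
    then have "gg * (\<bar>a\<bar> + \<bar>b\<bar>) \<le> (\<beta> 1 - \<beta> 0) * (- a - 2 * b)"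
      by (intro mm g1 g0) auto
    then show ?thesis using 9 by (simp add: rt_def Vh_def algebra_simps)
  qed
qed

lemma f_drift:
  "rt \<beta> h 1 * (fq (mv h 1) - fq h) + rt \<beta> h 2 * (fq (mv h 2) - fq h) + rt \<beta> h 3 * (fq (mv h 3) - fq h)
   \<le> TT \<beta> h - gg * (\<bar>real_of_int (fst h)\<bar> + \<bar>real_of_int (snd h)\<bar>)"
proof -
  obtain p q where h: "h = (p, q)" by (cases h)
  have "rt \<beta> h 1 * (fq (mv h 1) - fq h) + rt \<beta> h 2 * (fq (mv h 2) - fq h) + rt \<beta> h 3 * (fq (mv h 3) - fq h)
      = TT \<beta> h + (rt \<beta> (p, q) 1 * (2 * real_of_int p + real_of_int q)
         + rt \<beta> (p, q) 2 * (- real_of_int p + real_of_int q)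
         + rt \<beta> (p, q) 3 * (- real_of_int p - 2 * real_of_int q))"
    unfolding fq_diff h TT_def by (simp add: algebra_simps)
  also have "\<dots> \<le> TT \<beta> h - gg * (\<bar>real_of_int (fst h)\<bar> + \<bar>real_of_int (snd h)\<bar>)"
    using lin_drift[of p q] by (simp add: h)
  finally show ?thesis .
qed

end


lemma rt_t_le1: "(r::real) > 0 \<Longrightarrow> r \<le> S \<Longrightarrow> t \<le> B \<Longrightarrow> B \<ge> 0 \<Longrightarrow> r * t \<le> S * B"
proof -
  assume a: "r > 0" "r \<le> S" "t \<le> B" "B \<ge> 0"
  show ?thesis
  proof (cases "t \<ge> 0")
    case True
    then have "r * t \<le> S * t" using a by (simp add: mult_right_mono)
    also have "\<dots> \<le> S * B" using a by (simp add: mult_left_mono)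
    finally show ?thesis .
  next
    case False
    then have "r * t \<le> 0" using a by (simp add: mult_nonneg_nonpos less_imp_le)
    also have "0 \<le> S * B" using a by simp
    finally show ?thesis .
  qed
qed

lemma rt_t_le2: "(r::real) \<ge> b \<Longrightarrow> t \<le> 0 \<Longrightarrow> r * t \<le> b * t"
  by (simp add: mult_right_mono_neg)

context
  fixes \<beta> :: "nat \<Rightarrow> real"
  assumes b0: "\<beta> 0 > 0" and b1: "\<beta> 1 > \<beta> 0" and b2: "\<beta> 2 > \<beta> 0"
begin

definition SS :: real where "SS = \<beta> 0 + \<beta> 1 + \<beta> 2"
definition \<rho> :: real where "\<rho> = \<beta> 0 / (8 * SS)"

lemma SS_pos: "SS > 0" using b0 b1 b2 by (simp add: SS_def)
lemma SS_ge: "SS \<ge> \<beta> 0" using b0 b1 b2 by (simp add: SS_def)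
lemma rho_pos: "\<rho> > 0" using b0 SS_pos by (simp add: \<rho>_def)
lemma rho_le: "\<rho> \<le> 1 / 8"
  using b0 SS_ge SS_pos by (simp add: \<rho>_def field_simps)
lemma rho_SS: "2 * SS * \<rho> = \<beta> 0 / 4"
  using SS_pos by (simp add: \<rho>_def field_simps)

lemma rtS: "rt \<beta> h j \<le> SS"
  using rt_le[OF b0 b1 b2] by (simp add: SS_def)

lemma psi_drift:
  assumes hx: "h \<noteq> x"
  defines "d \<equiv> nat (Di x h)"
  defines "t \<equiv> \<lambda>j. \<rho> ^ d - \<rho> ^ nat (Di x (mv h j))"
  shows "rt \<beta> h 1 * t 1 + rt \<beta> h 2 * t 2 + rt \<beta> h 3 * t 3 \<le> - (\<beta> 0 / 2) * \<rho> ^ (d - 1)"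
proof -
  define q where "q = \<rho> ^ (d - 1)"
  have "Di x h \<noteq> 0" using Di_zero[of x h] hx by blast
  then have d1: "d \<ge> 1" using Di_nonneg[of x h] by (simp add: d_def)
  have rd: "\<rho> ^ d = \<rho> * q" using d1 by (simp add: q_def power_eq_if)
  have q0: "q > 0" using rho_pos by (simp add: q_def)
  have r1: "\<rho> \<le> 1" using rho_le by simp
  have tcases: "t j = - (1 - \<rho>) * q \<or> (0 \<le> t j \<and> t j \<le> \<rho> * q)" if j: "j \<in> {1, 2, 3}" for j
  proof -
    from Di_step[OF j, of x h] show ?thesis
    proof
      assume "Di x (mv h j) = Di x h - 1"
      then have "nat (Di x (mv h j)) = d - 1" by (simp add: d_def nat_diff_distrib)
      then show ?thesis by (simp add: t_def rd q_def algebra_simps)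
    next
      assume "Di x (mv h j) = Di x h + 2"
      then have "nat (Di x (mv h j)) = d + 2" using Di_nonneg[of x h] by (simp add: d_def nat_add_distrib)
      then have "t j = \<rho> * q - \<rho> ^ 3 * q" by (simp add: t_def rd q_def power_add algebra_simps d1 power3_eq_cube)
      moreover have "\<rho> ^ 3 * q \<le> \<rho> * q" using q0 rho_pos r1
        by (intro mult_right_mono) (auto simp: power3_eq_cube mult_le_one)
      moreover have "0 \<le> \<rho> ^ 3 * q" using q0 rho_pos by simp
      ultimately show ?thesis by auto
    qed
  qed
  have T1: "rt \<beta> h j * t j \<le> SS * (\<rho> * q)" if j: "j \<in> {1, 2, 3}" for j
  proof (rule rt_t_le1[OF rt_pos[OF b0 b1 b2] rtS])
    show "t j \<le> \<rho> * q" using tcases[OF j] q0 rho_pos r1 by (auto simp: mult_nonneg_nonneg)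
    show "0 \<le> \<rho> * q" using q0 rho_pos by simp
  qed
  obtain js where js: "js \<in> {1, 2, 3}" "Di x (mv h js) = Di x h - 1" using Di_dec[OF hx] by blast
  have tjs: "t js = - (1 - \<rho>) * q"
  proof -
    have "nat (Di x (mv h js)) = d - 1" using js by (simp add: d_def nat_diff_distrib)
    then show ?thesis by (simp add: t_def rd q_def algebra_simps)
  qed
  have T2: "rt \<beta> h js * t js \<le> - \<beta> 0 * (1 - \<rho>) * q"
  proof -
    have "rt \<beta> h js * t js \<le> \<beta> 0 * t js"
      by (rule rt_t_le2[OF rt_ge[OF b0 b1 b2]]) (use tjs q0 r1 in \<open>simp add: mult_nonpos_nonneg\<close>)
    then show ?thesis by (simp add: tjs algebra_simps)
  qed
  have key: "- \<beta> 0 * (1 - \<rho>) * q + 2 * (SS * (\<rho> * q)) \<le> - (\<beta> 0 / 2) * q"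
  proof -
    have e1: "2 * (SS * (\<rho> * q)) = (\<beta> 0 * q) / 4" using rho_SS by (simp add: algebra_simps)
    have e2: "\<beta> 0 * \<rho> * q \<le> (\<beta> 0 * q) / 8"
    proof -
      have "\<beta> 0 * \<rho> * q = (\<beta> 0 * q) * \<rho>" by (simp add: algebra_simps)
      also have "\<dots> \<le> (\<beta> 0 * q) * (1 / 8)" using rho_le b0 q0 by (intro mult_left_mono) auto
      finally show ?thesis by simp
    qed
    have e3: "- \<beta> 0 * (1 - \<rho>) * q = - (\<beta> 0 * q) + \<beta> 0 * \<rho> * q" by (simp add: algebra_simps)
    have e4: "- (\<beta> 0 / 2) * q = - (\<beta> 0 * q) / 2" by simp
    have "\<beta> 0 * q > 0" using b0 q0 by simp
    then show ?thesis unfolding e1 e3 e4 using e2 by linarith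
  qed
  from js(1) have "rt \<beta> h 1 * t 1 + rt \<beta> h 2 * t 2 + rt \<beta> h 3 * t 3 \<le> - \<beta> 0 * (1 - \<rho>) * q + 2 * (SS * (\<rho> * q))"
    using T1[of 1] T1[of 2] T1[of 3] T2 by auto
  also have "\<dots> \<le> - (\<beta> 0 / 2) * \<rho> ^ (d - 1)" using key by (simp add: q_def)
  finally show ?thesis .
qed

end


context
  fixes \<beta> :: "nat \<Rightarrow> real"
  assumes b0: "\<beta> 0 > 0" and b1: "\<beta> 1 > \<beta> 0" and b2: "\<beta> 2 > \<beta> 0"
begin

definition NN :: nat where "NN = nat \<lceil>(3 * SS \<beta> + 1) / gg \<beta>\<rceil>"
definition RR :: "int \<times> int \<Rightarrow> nat" where
  "RR x = nat (4 * (\<bar>fst x\<bar> + \<bar>snd x\<bar>) + 4 * int NN)"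
definition GG :: "int \<times> int \<Rightarrow> real" where
  "GG x = 2 * (3 * SS \<beta> + 1) / (\<beta> 0 * \<rho> \<beta> ^ RR x)"
definition Ur :: "int \<times> int \<Rightarrow> int \<times> int \<Rightarrow> real" where
  "Ur x h = fq h + GG x * (1 - \<rho> \<beta> ^ nat (Di x h))"

lemma GG_pos: "GG x > 0"
  using SS_pos[OF b0 b1 b2] rho_pos[OF b0 b1 b2] b0 by (simp add: GG_def)

lemma Ur_nonneg: "Ur x h \<ge> 0"
proof -
  have "\<rho> \<beta> ^ nat (Di x h) \<le> 1"
    using rho_pos[OF b0 b1 b2] rho_le[OF b0 b1 b2] by (intro power_le_one) auto
  then show ?thesis using fq_nonneg[of h] GG_pos[of x] by (simp add: Ur_def)
qed

lemma drift_total: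
  assumes hx: "h \<noteq> x"
  shows "rt \<beta> h 1 * (Ur x (mv h 1) - Ur x h) + rt \<beta> h 2 * (Ur x (mv h 2) - Ur x h)
       + rt \<beta> h 3 * (Ur x (mv h 3) - Ur x h) \<le> -1"
proof -
  define d where "d = nat (Di x h)"
  define t where "t = (\<lambda>j. \<rho> \<beta> ^ d - \<rho> \<beta> ^ nat (Di x (mv h j)))"
  define F where "F = rt \<beta> h 1 * (fq (mv h 1) - fq h) + rt \<beta> h 2 * (fq (mv h 2) - fq h)
       + rt \<beta> h 3 * (fq (mv h 3) - fq h)"
  define P where "P = rt \<beta> h 1 * t 1 + rt \<beta> h 2 * t 2 + rt \<beta> h 3 * t 3"
  define A where "A = \<bar>real_of_int (fst h)\<bar> + \<bar>real_of_int (snd h)\<bar>"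
  have split: "rt \<beta> h 1 * (Ur x (mv h 1) - Ur x h) + rt \<beta> h 2 * (Ur x (mv h 2) - Ur x h)
       + rt \<beta> h 3 * (Ur x (mv h 3) - Ur x h) = F + GG x * P"
    by (simp add: Ur_def F_def P_def t_def d_def algebra_simps)
  have Fb: "F \<le> 3 * SS \<beta> - gg \<beta> * A"
    using f_drift[OF b0 b1 b2, of h] TT_le[OF b0 b1 b2, of h]
    by (simp add: F_def A_def SS_def[OF b0 b1 b2])
  have Pb: "P \<le> - (\<beta> 0 / 2) * \<rho> \<beta> ^ (d - 1)"
    using psi_drift[OF b0 b1 b2 hx] by (simp add: P_def t_def d_def)
  have rpos: "\<rho> \<beta> > 0" using rho_pos[OF b0 b1 b2] .
  have "(\<beta> 0 / 2) * \<rho> \<beta> ^ (d - 1) \<ge> 0" using b0 rpos by simp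
  then have P0: "P \<le> 0" using Pb by linarith
  have Gp: "GG x > 0" by (rule GG_pos)
  have gp: "gg \<beta> > 0" by (rule gg_pos[OF b0 b1 b2])
  have A0: "A \<ge> 0" by (simp add: A_def)
  show ?thesis
  proof (cases "gg \<beta> * A \<ge> 3 * SS \<beta> + 1")
    case True
    have "GG x * P \<le> 0" using Gp P0 by (simp add: mult_nonneg_nonpos)
    then show ?thesis using split Fb True by linarith
  next
    case False
    then have "A < (3 * SS \<beta> + 1) / gg \<beta>" using gp by (simp add: field_simps)
    also have "\<dots> \<le> real NN" unfolding NN_def by linarith
    finally have AN: "A < real NN" .
    have "\<bar>fst h\<bar> + \<bar>snd h\<bar> \<le> int NN"
    proof -
      have "real_of_int (\<bar>fst h\<bar> + \<bar>snd h\<bar>) < real NN" using AN by (simp add: A_def)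
      then show ?thesis by linarith
    qed
    then have "4 * (\<bar>fst x\<bar> + \<bar>snd x\<bar> + \<bar>fst h\<bar> + \<bar>snd h\<bar>) \<le> 4 * (\<bar>fst x\<bar> + \<bar>snd x\<bar>) + 4 * int NN"
      by (simp add: algebra_simps)
    then have "Di x h \<le> 4 * (\<bar>fst x\<bar> + \<bar>snd x\<bar>) + 4 * int NN"
      using Di_bound[of x h] by (rule order_trans[rotated])
    then have dR: "d - 1 \<le> RR x" by (simp add: d_def RR_def)
    have "\<rho> \<beta> ^ RR x \<le> \<rho> \<beta> ^ (d - 1)"
      by (rule power_decreasing[OF dR]) (use rpos rho_le[OF b0 b1 b2] in auto)
    then have "GG x * (\<beta> 0 / 2) * \<rho> \<beta> ^ RR x \<le> GG x * (\<beta> 0 / 2) * \<rho> \<beta> ^ (d - 1)"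
      using Gp b0 by (intro mult_left_mono) auto
    moreover have "GG x * (\<beta> 0 / 2) * \<rho> \<beta> ^ RR x = 3 * SS \<beta> + 1"
      using b0 rpos by (simp add: GG_def field_simps)
    moreover have "GG x * P \<le> - (GG x * (\<beta> 0 / 2) * \<rho> \<beta> ^ (d - 1))"
      using mult_left_mono[OF Pb, of "GG x"] Gp by (simp add: algebra_simps)
    ultimately have "GG x * P \<le> - (3 * SS \<beta> + 1)" by linarith
    moreover have "gg \<beta> * A \<ge> 0" using gp A0 by simp
    ultimately show ?thesis using split Fb by linarith
  qed
qed

lemma foster_cond:
  assumes hx: "y \<noteq> x"
  shows "ennreal (1 / (3 * SS \<beta>)) + infsum (\<lambda>z. jump_prob (shape_Q \<beta>) y z * ennreal (Ur x z)) UNIV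
         \<le> ennreal (Ur x y)"
proof -
  define T where "T = TT \<beta> y"
  define W where "W = rt \<beta> y 1 * Ur x (mv y 1) + rt \<beta> y 2 * Ur x (mv y 2) + rt \<beta> y 3 * Ur x (mv y 3)"
  have Tpos: "T > 0" using TT_pos[OF b0 b1 b2, of y] b0 by (simp add: T_def)
  have TS: "T \<le> 3 * SS \<beta>" using TT_le[OF b0 b1 b2, of y] by (simp add: T_def SS_def[OF b0 b1 b2])
  have "W = T * Ur x y + (rt \<beta> y 1 * (Ur x (mv y 1) - Ur x y) + rt \<beta> y 2 * (Ur x (mv y 2) - Ur x y)
       + rt \<beta> y 3 * (Ur x (mv y 3) - Ur x y))"
    by (simp add: W_def T_def TT_def algebra_simps)
  then have "W \<le> T * Ur x y - 1" using drift_total[OF hx] by linarith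
  then have "W / T \<le> Ur x y - 1 / T" using Tpos by (simp add: field_simps)
  moreover have "1 / (3 * SS \<beta>) \<le> 1 / T" using Tpos TS by (simp add: frac_le)
  ultimately have real: "1 / (3 * SS \<beta>) + W / T \<le> Ur x y" by linarith
  have W0: "W \<ge> 0" unfolding W_def
    using Ur_nonneg by (intro add_nonneg_nonneg mult_nonneg_nonneg) (simp_all add: less_imp_le[OF rt_pos[OF b0 b1 b2]])
  have "infsum (\<lambda>z. jump_prob (shape_Q \<beta>) y z * ennreal (Ur x z)) UNIV = ennreal (W / T)"
    unfolding W_def T_def by (rule infsum_jump_shape[OF b0 b1 b2]) (rule Ur_nonneg)
  moreover have "ennreal (1 / (3 * SS \<beta>)) + ennreal (W / T) = ennreal (1 / (3 * SS \<beta>) + W / T)"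
    using SS_pos[OF b0 b1 b2] W0 Tpos by (simp add: ennreal_plus)
  ultimately show ?thesis using real by (simp add: ennreal_leI)
qed

end


context
  fixes \<beta> :: "nat \<Rightarrow> real"
  assumes b0: "\<beta> 0 > 0" and b1: "\<beta> 1 > \<beta> 0" and b2: "\<beta> 2 > \<beta> 0"
begin

abbreviation "Rel \<equiv> {(a, b). a \<noteq> b \<and> shape_Q \<beta> a b > 0}"

lemma step_mv: "j \<in> {1, 2, 3} \<Longrightarrow> (h, mv h j) \<in> Rel"
  using mv_distinct[of h] shape_Q_mv[of \<beta> h] rt_pos[OF b0 b1 b2, of h] by auto

lemma right: "(h, (fst h + 1, snd h)) \<in> Rel\<^sup>*"
proof -
  have "(h, mv h 1) \<in> Rel" by (rule step_mv) simp
  then have "(h, mv h 1) \<in> Rel\<^sup>*" by (rule r_into_rtrancl)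
  then show ?thesis by (simp add: mv_def)
qed

lemma down: "(h, (fst h, snd h - 1)) \<in> Rel\<^sup>*"
proof -
  have "(h, mv h 3) \<in> Rel" by (rule step_mv) simp
  then have "(h, mv h 3) \<in> Rel\<^sup>*" by (rule r_into_rtrancl)
  then show ?thesis by (simp add: mv_def)
qed

lemma left: "(h, (fst h - 1, snd h)) \<in> Rel\<^sup>*"
proof -
  have "(h, mv h 2) \<in> Rel" by (rule step_mv) simp
  moreover have "(mv h 2, mv (mv h 2) 3) \<in> Rel" by (rule step_mv) simp
  ultimately have "(h, mv (mv h 2) 3) \<in> Rel\<^sup>*" by (meson r_into_rtrancl rtrancl_into_rtrancl)
  then show ?thesis by (simp add: mv_def)
qed

lemma up: "(h, (fst h, snd h + 1)) \<in> Rel\<^sup>*"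
proof -
  have "(h, mv h 1) \<in> Rel" by (rule step_mv) simp
  moreover have "(mv h 1, mv (mv h 1) 2) \<in> Rel" by (rule step_mv) simp
  ultimately have "(h, mv (mv h 1) 2) \<in> Rel\<^sup>*" by (meson r_into_rtrancl rtrancl_into_rtrancl)
  then show ?thesis by (simp add: mv_def)
qed

lemma horiz_nat: "((p, q), (p + int k, q)) \<in> Rel\<^sup>*" "((p, q), (p - int k, q)) \<in> Rel\<^sup>*"
proof (induction k)
  case 0
  show "((p, q), (p + int 0, q)) \<in> Rel\<^sup>*" "((p, q), (p - int 0, q)) \<in> Rel\<^sup>*" by simp_all
next
  case (Suc k)
  show "((p, q), (p + int (Suc k), q)) \<in> Rel\<^sup>*"
    using rtrancl_trans[OF Suc.IH(1) right[of "(p + int k, q)"]] by (simp add: algebra_simps)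
  show "((p, q), (p - int (Suc k), q)) \<in> Rel\<^sup>*"
    using rtrancl_trans[OF Suc.IH(2) left[of "(p - int k, q)"]] by (simp add: algebra_simps)
qed

lemma vert_nat: "((p, q), (p, q + int k)) \<in> Rel\<^sup>*" "((p, q), (p, q - int k)) \<in> Rel\<^sup>*"
proof (induction k)
  case 0
  show "((p, q), (p, q + int 0)) \<in> Rel\<^sup>*" "((p, q), (p, q - int 0)) \<in> Rel\<^sup>*" by simp_all
next
  case (Suc k)
  show "((p, q), (p, q + int (Suc k))) \<in> Rel\<^sup>*"
    using rtrancl_trans[OF Suc.IH(1) up[of "(p, q + int k)"]] by (simp add: algebra_simps)
  show "((p, q), (p, q - int (Suc k))) \<in> Rel\<^sup>*"
    using rtrancl_trans[OF Suc.IH(2) down[of "(p, q - int k)"]] by (simp add: algebra_simps)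
qed

lemma horiz: "((p, q), (p', q)) \<in> Rel\<^sup>*"
proof (cases "p' \<ge> p")
  case True
  then show ?thesis using horiz_nat(1)[of p q "nat (p' - p)"] by simp
next
  case False
  then show ?thesis using horiz_nat(2)[of p q "nat (p - p')"] by simp
qed

lemma vert: "((p, q), (p, q')) \<in> Rel\<^sup>*"
proof (cases "q' \<ge> q")
  case True
  then show ?thesis using vert_nat(1)[of p q "nat (q' - q)"] by simp
next
  case False
  then show ?thesis using vert_nat(2)[of p q "nat (q - q')"] by simp
qed

lemma irred: "ctmc_irreducible (shape_Q \<beta>)"
  unfolding ctmc_irreducible_def
proof (intro allI)
  fix a b :: "int \<times> int"
  obtain p q where a: "a = (p, q)" by (cases a)
  obtain p' q' where b: "b = (p', q')" by (cases b)
  show "(a, b) \<in> Rel\<^sup>*"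
    unfolding a b using rtrancl_trans[OF horiz[of p q p'] vert[of p' q q']] .
qed

lemma posrec: "positive_recurrent_state (shape_Q \<beta>) x"
proof (rule pos_rec_from_foster[where U = "\<lambda>z. ennreal (Ur \<beta> x z)" and e = "1 / (3 * SS \<beta>)" and c = "3 * \<beta> 0"])
  show "\<And>w. infsum (jump_prob (shape_Q \<beta>) w) UNIV = 1" by (rule stoch_shape[OF b0 b1 b2])
  show "\<And>y. y \<noteq> x \<Longrightarrow> ennreal (1 / (3 * SS \<beta>)) + infsum (\<lambda>z. jump_prob (shape_Q \<beta>) y z * ennreal (Ur \<beta> x z)) UNIV
        \<le> ennreal (Ur \<beta> x y)"
    by (rule foster_cond[OF b0 b1 b2])
  show "0 < 1 / (3 * SS \<beta>)" using SS_pos[OF b0 b1 b2] by simp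
  show "infsum (\<lambda>z. jump_prob (shape_Q \<beta>) x z * ennreal (Ur \<beta> x z)) UNIV < top"
    by (subst infsum_jump_shape[OF b0 b1 b2]) (simp_all add: Ur_nonneg[OF b0 b1 b2])
  show "\<And>z. \<exists>t. total_rate (shape_Q \<beta>) z = ennreal t \<and> 3 * \<beta> 0 \<le> t"
    using total_rate_shape[OF b0 b1 b2] TT_pos[OF b0 b1 b2] by blast
  show "0 < 3 * \<beta> 0" using b0 by simp
qed

end

theorem corollary7:
  fixes \<beta> :: "nat \<Rightarrow> real"
  assumes "\<beta> 0 > 0" and "\<beta> 1 > 0" and "\<beta> 2 > 0"
    and "\<beta> 1 > \<beta> 0" and "\<beta> 2 > \<beta> 0"
  shows "ctmc_ergodic (shape_Q \<beta>)"
  unfolding ctmc_ergodic_def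
  using irred[OF assms(1) assms(4) assms(5)] posrec[OF assms(1) assms(4) assms(5)] by blast


end
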